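(* In the setting below, let $e,f\in G_0$ with $T_e\cap S_f\neq\emptyset$, and let $n_{e,f}=|T_e\cap S_f|=|\{g\in G: r(g)=e,\ d(g)=f\}|$. Then $$B_{e,f}=\bigoplus_{g\in G_e,\ l\in T_e\cap S_f}E_g\delta_g\#v_l\ \cong\ M_{n_{e,f}}(E_e)$$ as unital $K$-algebras, where $B_{e,f}$ has identity $1_e\delta_e\#\sum_{l\in T_e\cap S_f}v_l$.
   Context: Groupoid conventions. A groupoid is a small category with all morphisms invertible, regarded as the set $G$ of morphisms. For $g\in G$ we have $d(g)=g^{-1}g$ and $r(g)=gg^{-1}$. The product $gh$ is defined iff $d(g)=r(h)$, and then $d(gh)=d(h)$, $r(gh)=r(g)$. $G^2=\{(g,h):d(g)=r(h)\}$, and $G_0$ is the set of identities. For $e\in G_0$: - $G_e=\{g: d(g)=r(g)=e\}$; - $S_e=\{g\in G: d(g)=e\}$; - $T_e=\{g\in G: r(g)=e\}$. Actions. An action of $G$ on a ring $R$ is a pair $\beta=(\{E_g\},\{\beta_g\})$ where each $E_g=E_{r(g)}$ is an ideal of $R$, each $\beta_g:E_{g^{-1}}\to E_g$ is a ring isomorphism, $\beta_e=\mathrm{id}$ for $e\in G_0$, and $\beta_g\beta_h=\beta_{gh}$ on $E_{h^{-1}}$ for $(g,h)\in G^2$. Skew groupoid ring. $R\star_\beta G=\bigoplus_{g\in G}E_g\delta_g$ (the $\delta_g$ are formal symbols), with $(x\delta_g)(y\delta_h)=x\beta_g(y)\delta_{gh}$ if $(g,h)\in G^2$ and $0$ otherwise,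 for $x\in E_g$, $y\in E_h$. $KG^*$. The free $K$-module with basis $\{v_g\}_{g\in G}$, with $v_gv_h=\delta_{g,h}v_g$ and identity $\sum_g v_g$. Weak smash product. For a unital $G$-graded algebra $A=\bigoplus A_g$ (with $A_gA_h\subseteq A_{gh}$ if $(g,h)\in G^2$, and $0$ otherwise), $KG^*$ acts by $v_h\cdot a=a_h$ (the $h$-component). $A\#KG^*=A\otimes_K KG^*$ with $(a\#v_g)(b\#v_h)=a(v_{gh^{-1}}\cdot b)\#v_h$ if $d(g)=d(h)$, and $0$ otherwise. Setting. $K$ is a commutative unital ring and $G$ is a finite groupoid. $R$ is a not necessarily unital $K$-algebra with an action $\beta$ of $G$ (by $K$-linear maps) such that each $E_e$, $e\in G_0$, has an identity element $1_e$; put $1_g:=1_{r(g)}$, the identity of $E_g$. Then $R\star_\beta G$ is a unital $K$-algebra with identity $\sum_{e\in G_0}1_e\delta_e$. It is $G$-graded with $g$-component $E_g\delta_g$, so that $v_k\cdot(a_g\delta_g)=\delta_{k,g}a_g\delta_g$. Let $B=(R\star_\beta G)\#KG^*=\bigoplus_{g,h\in G}E_g\delta_g\#v_h$. $M_n(X)$ denotes the $n\times n$ matrix algebra over $X$. *)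

theory Defs
  imports Main "HOL.Modules"
begin

definition gdom :: "('g \<Rightarrow> 'g \<Rightarrow> 'g) \<Rightarrow> ('g \<Rightarrow> 'g) \<Rightarrow> 'g \<Rightarrow> 'g" where
  "gdom m i g = m (i g) g"

definition gran :: "('g \<Rightarrow> 'g \<Rightarrow> 'g) \<Rightarrow> ('g \<Rightarrow> 'g) \<Rightarrow> 'g \<Rightarrow> 'g" where
  "gran m i g = m g (i g)"

definition groupoid :: "'g set \<Rightarrow> ('g \<Rightarrow> 'g \<Rightarrow> 'g) \<Rightarrow> ('g \<Rightarrow> 'g) \<Rightarrow> bool" where
  "groupoid G m i \<longleftrightarrow>
     (\<forall>g\<in>G. i g \<in> G \<and> gdom m i (i g) = gran m i g \<and> gran m i (i g) = gdom m i g) \<and>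
     (\<forall>g\<in>G. \<forall>h\<in>G. gdom m i g = gran m i h \<longrightarrow>
        m g h \<in> G \<and> gdom m i (m g h) = gdom m i h \<and> gran m i (m g h) = gran m i g) \<and>
     (\<forall>g\<in>G. \<forall>h\<in>G. \<forall>k\<in>G. gdom m i g = gran m i h \<longrightarrow> gdom m i h = gran m i k \<longrightarrow>
        m (m g h) k = m g (m h k)) \<and>
     (\<forall>g\<in>G. m (gran m i g) g = g \<and> m g (gdom m i g) = g)"

definition gobjs :: "'g set \<Rightarrow> ('g \<Rightarrow> 'g \<Rightarrow> 'g) \<Rightarrow> ('g \<Rightarrow> 'g) \<Rightarrow> 'g set" where
  "gobjs G m i = {e \<in> G. gdom m i e = e}"

definition ring_ideal :: "'r::ring set \<Rightarrow> bool" where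
  "ring_ideal I \<longleftrightarrow> 0 \<in> I \<and> (\<forall>x\<in>I. \<forall>y\<in>I. x - y \<in> I) \<and> (\<forall>x\<in>I. \<forall>y. y * x \<in> I \<and> x * y \<in> I)"

text \<open>R (the type 'r, a not necessarily unital ring) is a K-algebra via sc.\<close>
definition kalgebra :: "('k::comm_ring_1 \<Rightarrow> 'r::ring \<Rightarrow> 'r) \<Rightarrow> bool" where
  "kalgebra sc \<longleftrightarrow> module sc \<and> (\<forall>c x y. sc c (x * y) = sc c x * y \<and> sc c (x * y) = x * sc c y)"

definition groupoid_action ::
  "'g set \<Rightarrow> ('g \<Rightarrow> 'g \<Rightarrow> 'g) \<Rightarrow> ('g \<Rightarrow> 'g) \<Rightarrow> ('k::comm_ring_1 \<Rightarrow> 'r::ring \<Rightarrow> 'r)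
     \<Rightarrow> ('g \<Rightarrow> 'r set) \<Rightarrow> ('g \<Rightarrow> 'r \<Rightarrow> 'r) \<Rightarrow> bool" where
  "groupoid_action G m i sc E \<beta> \<longleftrightarrow>
     (\<forall>g\<in>G. E g = E (gran m i g)) \<and>
     (\<forall>e\<in>gobjs G m i. ring_ideal (E e)) \<and>
     (\<forall>g\<in>G. bij_betw (\<beta> g) (E (i g)) (E g) \<and>
        (\<forall>x\<in>E (i g). \<forall>y\<in>E (i g). \<beta> g (x + y) = \<beta> g x + \<beta> g y \<and> \<beta> g (x * y) = \<beta> g x * \<beta> g y) \<and>
        (\<forall>c. \<forall>x\<in>E (i g). \<beta> g (sc c x) = sc c (\<beta> g x))) \<and>
     (\<forall>e\<in>gobjs G m i. \<forall>x\<in>E e. \<beta> e x = x) \<and>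
     (\<forall>g\<in>G. \<forall>h\<in>G. gdom m i g = gran m i h \<longrightarrow> (\<forall>x\<in>E (i h). \<beta> g (\<beta> h x) = \<beta> (m g h) x))"

text \<open>An element of R \<star>_\<beta> G = \<Oplus> E_g \<delta>_g is represented as a function a with a g \<in> E_g
  (the coefficient of \<delta>_g), zero outside G.\<close>
definition skew_mult ::
  "'g set \<Rightarrow> ('g \<Rightarrow> 'g \<Rightarrow> 'g) \<Rightarrow> ('g \<Rightarrow> 'g) \<Rightarrow> ('g \<Rightarrow> 'r::ring \<Rightarrow> 'r)
     \<Rightarrow> ('g \<Rightarrow> 'r) \<Rightarrow> ('g \<Rightarrow> 'r) \<Rightarrow> ('g \<Rightarrow> 'r)" where
  "skew_mult G m i \<beta> a b = (\<lambda>p. \<Sum>(k, l)\<in>{(k, l) \<in> G \<times> G. gdom m i k = gran m i l \<and> m k l = p}.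
        a k * \<beta> k (b l))"

text \<open>The action of v_k on the graded algebra: the k-component.\<close>
definition gcomp :: "'g \<Rightarrow> ('g \<Rightarrow> 'r::zero) \<Rightarrow> ('g \<Rightarrow> 'r)" where
  "gcomp k a = (\<lambda>g. if g = k then a g else 0)"

text \<open>An element \<Sum>_h x_h # v_h of (R \<star>_\<beta> G) # KG* is represented as x with x h the element x_h
  of the skew groupoid ring; so x h g is the coefficient of E_g \<delta>_g # v_h.\<close>
definition smash_mult ::
  "'g set \<Rightarrow> ('g \<Rightarrow> 'g \<Rightarrow> 'g) \<Rightarrow> ('g \<Rightarrow> 'g) \<Rightarrow> ('g \<Rightarrow> 'r::ring \<Rightarrow> 'r)
     \<Rightarrow> ('g \<Rightarrow> 'g \<Rightarrow> 'r) \<Rightarrow> ('g \<Rightarrow> 'g \<Rightarrow> 'r) \<Rightarrow> ('g \<Rightarrow> 'g \<Rightarrow> 'r)" where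
  "smash_mult G m i \<beta> x y = (\<lambda>h. if h \<in> G then
      (\<lambda>p. \<Sum>g\<in>{g \<in> G. gdom m i g = gdom m i h}.
             skew_mult G m i \<beta> (x g) (gcomp (m g (i h)) (y h)) p)
      else (\<lambda>_. 0))"

definition Bef :: "'g set \<Rightarrow> ('g \<Rightarrow> 'g \<Rightarrow> 'g) \<Rightarrow> ('g \<Rightarrow> 'g) \<Rightarrow> ('g \<Rightarrow> 'r::zero set) \<Rightarrow> 'g \<Rightarrow> 'g
     \<Rightarrow> ('g \<Rightarrow> 'g \<Rightarrow> 'r) set" where
  "Bef G m i E e f = {x. (\<forall>l g. x l g \<noteq> 0 \<longrightarrow>
        l \<in> G \<and> gran m i l = e \<and> gdom m i l = f \<and> g \<in> G \<and> gdom m i g = e \<and> gran m i g = e) \<and>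
      (\<forall>l\<in>G. \<forall>g\<in>G. x l g \<in> E g)}"

definition Bef_one :: "'g set \<Rightarrow> ('g \<Rightarrow> 'g \<Rightarrow> 'g) \<Rightarrow> ('g \<Rightarrow> 'g) \<Rightarrow> ('g \<Rightarrow> 'r::zero) \<Rightarrow> 'g \<Rightarrow> 'g
     \<Rightarrow> ('g \<Rightarrow> 'g \<Rightarrow> 'r)" where
  "Bef_one G m i u e f = (\<lambda>l g. if l \<in> G \<and> gran m i l = e \<and> gdom m i l = f \<and> g = e then u e else 0)"

definition mat_carrier :: "nat \<Rightarrow> 'r::zero set \<Rightarrow> (nat \<Rightarrow> nat \<Rightarrow> 'r) set" where
  "mat_carrier n I = {A. \<forall>p q. (p < n \<and> q < n \<longrightarrow> A p q \<in> I) \<and> (\<not> (p < n \<and> q < n) \<longrightarrow> A p q = 0)}"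

definition mat_mult :: "nat \<Rightarrow> (nat \<Rightarrow> nat \<Rightarrow> 'r::ring) \<Rightarrow> (nat \<Rightarrow> nat \<Rightarrow> 'r) \<Rightarrow> (nat \<Rightarrow> nat \<Rightarrow> 'r)" where
  "mat_mult n A C = (\<lambda>p q. if p < n \<and> q < n then (\<Sum>k<n. A p k * C k q) else 0)"

definition mat_one :: "nat \<Rightarrow> 'r::zero \<Rightarrow> (nat \<Rightarrow> nat \<Rightarrow> 'r)" where
  "mat_one n one = (\<lambda>p q. if p < n \<and> q < n \<and> p = q then one else 0)"

end

theory Submission
  imports Defs
begin


locale gpd =
  fixes G :: "'g set" and m :: "'g \<Rightarrow> 'g \<Rightarrow> 'g" and i :: "'g \<Rightarrow> 'g"
  assumes grp: "groupoid G m i"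
begin

abbreviation "d \<equiv> gdom m i"
abbreviation "r \<equiv> gran m i"

lemma inv_closed[simp]: "g \<in> G \<Longrightarrow> i g \<in> G"
  and d_inv[simp]: "g \<in> G \<Longrightarrow> d (i g) = r g"
  and r_inv[simp]: "g \<in> G \<Longrightarrow> r (i g) = d g"
  using grp unfolding groupoid_def by blast+

lemma mult_closed[simp]: "g \<in> G \<Longrightarrow> h \<in> G \<Longrightarrow> d g = r h \<Longrightarrow> m g h \<in> G"
  and d_mult[simp]: "g \<in> G \<Longrightarrow> h \<in> G \<Longrightarrow> d g = r h \<Longrightarrow> d (m g h) = d h"
  and r_mult[simp]: "g \<in> G \<Longrightarrow> h \<in> G \<Longrightarrow> d g = r h \<Longrightarrow> r (m g h) = r g"
  using grp unfolding groupoid_def by blast+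

lemma assoc[simp]: "g \<in> G \<Longrightarrow> h \<in> G \<Longrightarrow> k \<in> G \<Longrightarrow> d g = r h \<Longrightarrow> d h = r k \<Longrightarrow>
   m (m g h) k = m g (m h k)"
  using grp unfolding groupoid_def by blast

lemma lunit[simp]: "g \<in> G \<Longrightarrow> m (r g) g = g"
  and runit[simp]: "g \<in> G \<Longrightarrow> m g (d g) = g"
  using grp unfolding groupoid_def by blast+

lemma d_eq[simp]: "m (i g) g = d g" by (simp add: gdom_def)
lemma r_eq[simp]: "m g (i g) = r g" by (simp add: gran_def)

lemma d_closed[simp]: "g \<in> G \<Longrightarrow> d g \<in> G"
  by (metis d_eq inv_closed mult_closed d_inv)
lemma r_closed[simp]: "g \<in> G \<Longrightarrow> r g \<in> G"
  by (metis r_eq inv_closed mult_closed r_inv)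
lemma d_d[simp]: "g \<in> G \<Longrightarrow> d (d g) = d g"
  by (metis d_eq inv_closed d_mult d_inv)
lemma r_d[simp]: "g \<in> G \<Longrightarrow> r (d g) = d g"
  by (metis d_eq inv_closed r_mult d_inv r_inv)
lemma d_r[simp]: "g \<in> G \<Longrightarrow> d (r g) = r g"
  by (metis r_eq inv_closed d_mult d_inv r_inv)
lemma r_r[simp]: "g \<in> G \<Longrightarrow> r (r g) = r g"
  by (metis r_eq inv_closed r_mult r_inv)

lemma lunit'[simp]: "g \<in> G \<Longrightarrow> h \<in> G \<Longrightarrow> d g = r h \<Longrightarrow> m (d g) h = h"
  by simp
lemma runit'[simp]: "g \<in> G \<Longrightarrow> h \<in> G \<Longrightarrow> d h = r g \<Longrightarrow> m h (r g) = h"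
  by (metis runit)

lemma cancel_l[simp]: "g \<in> G \<Longrightarrow> h \<in> G \<Longrightarrow> d g = r h \<Longrightarrow> m (i g) (m g h) = h"
proof -
  assume a: "g \<in> G" "h \<in> G" "d g = r h"
  have "m (i g) (m g h) = m (m (i g) g) h" using a by (subst assoc) auto
  also have "\<dots> = h" using a by simp
  finally show ?thesis .
qed

lemma cancel_l2[simp]: "g \<in> G \<Longrightarrow> h \<in> G \<Longrightarrow> r g = r h \<Longrightarrow> m g (m (i g) h) = h"
proof -
  assume a: "g \<in> G" "h \<in> G" "r g = r h"
  have "m g (m (i g) h) = m (m g (i g)) h" using a by (subst assoc) auto
  also have "\<dots> = h" using a by (metis lunit r_eq)
  finally show ?thesis .
qed

lemma cancel_r: "k \<in> G \<Longrightarrow> k' \<in> G \<Longrightarrow> l \<in> G \<Longrightarrow> d k = r l \<Longrightarrow> d k' = r l \<Longrightarrow> m k l = m k' l \<Longrightarrow> k = k'"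
proof -
  assume a: "k \<in> G" "k' \<in> G" "l \<in> G" "d k = r l" "d k' = r l" "m k l = m k' l"
  have "m (m k l) (i l) = k" using a(1-5) by simp
  moreover have "m (m k' l) (i l) = k'" using a(1-5) by simp
  ultimately show ?thesis using a(6) by metis
qed

lemma obj_props: "e \<in> gobjs G m i \<Longrightarrow> e \<in> G \<and> d e = e \<and> r e = e"
  unfolding gobjs_def by (metis (mono_tags, lifting) mem_Collect_eq r_d)

lemma r_obj: "g \<in> G \<Longrightarrow> r g \<in> gobjs G m i"
  unfolding gobjs_def by simp

end


locale setting = gpd G m i
  for G :: "'g set" and m i +
  fixes sc :: "'k::comm_ring_1 \<Rightarrow> 'r::ring \<Rightarrow> 'r"
    and E :: "'g \<Rightarrow> 'r set" and \<beta> :: "'g \<Rightarrow> 'r \<Rightarrow> 'r" and u :: "'g \<Rightarrow> 'r"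
    and e f :: 'g
  assumes fin: "finite G"
    and kal: "kalgebra sc"
    and act: "groupoid_action G m i sc E \<beta>"
    and uni: "\<forall>e'\<in>gobjs G m i. u e' \<in> E e' \<and> (\<forall>x\<in>E e'. u e' * x = x \<and> x * u e' = x)"
    and eobj: "e \<in> gobjs G m i" and fobj: "f \<in> gobjs G m i"
    and ne: "{g \<in> G. gran m i g = e \<and> gdom m i g = f} \<noteq> {}"
begin

definition T where "T = {g \<in> G. r g = e \<and> d g = f}"
definition n where "n = card T"

lemma e_props[simp]: "e \<in> G" "d e = e" "r e = e" using obj_props[OF eobj] by auto
lemma f_props[simp]: "f \<in> G" "d f = f" "r f = f" using obj_props[OF fobj] by auto

lemma E_r: "g \<in> G \<Longrightarrow> E g = E (r g)"
  using act unfolding groupoid_action_def by blast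

lemma E_i: "g \<in> G \<Longrightarrow> E (i g) = E (d g)"
  using E_r[of "i g"] by simp

lemma ideal_E: "g \<in> G \<Longrightarrow> ring_ideal (E g)"
proof -
  assume g: "g \<in> G"
  have "\<forall>e\<in>gobjs G m i. ring_ideal (E e)" using act unfolding groupoid_action_def by blast
  then show ?thesis using r_obj[OF g] E_r[OF g] by simp
qed

lemma zero_E[simp]: "g \<in> G \<Longrightarrow> 0 \<in> E g"
  using ideal_E unfolding ring_ideal_def by blast

lemma diff_E: "g \<in> G \<Longrightarrow> x \<in> E g \<Longrightarrow> y \<in> E g \<Longrightarrow> x - y \<in> E g"
  using ideal_E unfolding ring_ideal_def by blast

lemma add_E: "g \<in> G \<Longrightarrow> x \<in> E g \<Longrightarrow> y \<in> E g \<Longrightarrow> x + y \<in> E g"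
  using diff_E[of g x "0 - y"] diff_E[of g 0 y] by simp

lemma multl_E: "g \<in> G \<Longrightarrow> x \<in> E g \<Longrightarrow> x * y \<in> E g"
  using ideal_E unfolding ring_ideal_def by blast

lemma multr_E: "g \<in> G \<Longrightarrow> x \<in> E g \<Longrightarrow> y * x \<in> E g"
  using ideal_E unfolding ring_ideal_def by blast

lemma sum_E: "g \<in> G \<Longrightarrow> (\<And>a. a \<in> A \<Longrightarrow> F a \<in> E g) \<Longrightarrow> sum F A \<in> E g"
proof (induction A rule: infinite_finite_induct)
  case (insert x F) then show ?case by (simp add: add_E)
qed auto

lemma beta_bij: "g \<in> G \<Longrightarrow> bij_betw (\<beta> g) (E (i g)) (E g)"
  using act unfolding groupoid_action_def by blast

lemma beta_mem: "g \<in> G \<Longrightarrow> x \<in> E (i g) \<Longrightarrow> \<beta> g x \<in> E g"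
  using beta_bij bij_betwE by blast

lemma beta_add: "g \<in> G \<Longrightarrow> x \<in> E (i g) \<Longrightarrow> y \<in> E (i g) \<Longrightarrow> \<beta> g (x + y) = \<beta> g x + \<beta> g y"
  using act unfolding groupoid_action_def by blast

lemma beta_mult: "g \<in> G \<Longrightarrow> x \<in> E (i g) \<Longrightarrow> y \<in> E (i g) \<Longrightarrow> \<beta> g (x * y) = \<beta> g x * \<beta> g y"
  using act unfolding groupoid_action_def by blast

lemma beta_sc: "g \<in> G \<Longrightarrow> x \<in> E (i g) \<Longrightarrow> \<beta> g (sc c x) = sc c (\<beta> g x)"
  using act unfolding groupoid_action_def by blast

lemma beta_obj: "g \<in> gobjs G m i \<Longrightarrow> x \<in> E g \<Longrightarrow> \<beta> g x = x"
  using act unfolding groupoid_action_def by blast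

lemma beta_comp: "g \<in> G \<Longrightarrow> h \<in> G \<Longrightarrow> d g = r h \<Longrightarrow> x \<in> E (i h) \<Longrightarrow> \<beta> g (\<beta> h x) = \<beta> (m g h) x"
  using act unfolding groupoid_action_def by blast

lemma beta_zero[simp]: "g \<in> G \<Longrightarrow> \<beta> g 0 = 0"
  using beta_add[of g 0 0] by simp

lemma beta_sum: "g \<in> G \<Longrightarrow> (\<And>a. a \<in> A \<Longrightarrow> F a \<in> E (i g)) \<Longrightarrow> \<beta> g (sum F A) = (\<Sum>a\<in>A. \<beta> g (F a))"
proof (induction A rule: infinite_finite_induct)
  case (insert x A)
  have "sum F A \<in> E (i g)" using insert by (intro sum_E) auto
  then show ?case using insert by (simp add: beta_add)
qed auto

lemma sc_zero[simp]: "sc c 0 = 0"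
  using kal unfolding kalgebra_def by (simp add: module.scale_zero_right)

lemma unit_e: "u e \<in> E e" "x \<in> E e \<Longrightarrow> u e * x = x" "x \<in> E e \<Longrightarrow> x * u e = x"
  using uni eobj by auto

lemma beta_unit: "h \<in> G \<Longrightarrow> d h = e \<Longrightarrow> r h = e \<Longrightarrow> \<beta> h (u e) = u e"
proof -
  assume h: "h \<in> G" "d h = e" "r h = e"
  have Ei: "E (i h) = E e" using h E_i[OF h(1)] by simp
  have Eh: "E h = E e" using E_r[OF h(1)] h(3) by simp
  have "u e \<in> E h" using Eh unit_e by simp
  then obtain y where y: "y \<in> E (i h)" "\<beta> h y = u e" using beta_bij[OF h(1)]
    by (metis bij_betw_imp_surj_on imageE)
  have mm: "\<beta> h (u e * y) = \<beta> h (u e) * \<beta> h y"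
    by (rule beta_mult[OF h(1)]) (use y Ei unit_e in auto)
  have uy: "u e * y = y" using y Ei unit_e by auto
  have "\<beta> h (u e) * u e = \<beta> h (u e) * \<beta> h y" using y by simp
  also have "\<dots> = \<beta> h (u e * y)" using mm by simp
  also have "\<dots> = u e" using y uy by simp
  finally have 1: "\<beta> h (u e) * u e = u e" .
  have "\<beta> h (u e) \<in> E e" using beta_mem[OF h(1)] Ei Eh unit_e by simp
  then have "\<beta> h (u e) * u e = \<beta> h (u e)" using unit_e by simp
  with 1 show ?thesis by simp
qed

end


context setting begin

lemma T_mem: "a \<in> T \<longleftrightarrow> a \<in> G \<and> r a = e \<and> d a = f" by (simp add: T_def)

definition ge where "ge g \<longleftrightarrow> g \<in> G \<and> d g = e \<and> r g = e"

lemma ge_E: "ge g \<Longrightarrow> E g = E e" using E_r unfolding ge_def by metis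
lemma ge_Ei: "ge g \<Longrightarrow> E (i g) = E e" using E_i unfolding ge_def by metis

lemma TT_ge: "a \<in> T \<Longrightarrow> c \<in> T \<Longrightarrow> ge (m a (i c))"
  unfolding ge_def T_mem by auto

lemma Bef_D: "x \<in> Bef G m i E e f \<Longrightarrow> x l g \<noteq> 0 \<Longrightarrow> l \<in> T \<and> ge g"
  unfolding Bef_def T_mem ge_def by blast

lemma Bef_E: "x \<in> Bef G m i E e f \<Longrightarrow> l \<in> G \<Longrightarrow> g \<in> G \<Longrightarrow> x l g \<in> E g"
  unfolding Bef_def by blast

lemma Bef_Ee: "x \<in> Bef G m i E e f \<Longrightarrow> ge g \<Longrightarrow> x l g \<in> E e"
proof (cases "x l g = 0")
  case True then show ?thesis using e_props by simp
next
  case False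
  assume "x \<in> Bef G m i E e f" "ge g"
  then show ?thesis using Bef_D[of x l g] False Bef_E[of x l g] ge_E[of g] unfolding T_mem ge_def by auto
qed

lemma T_fin: "finite T" using fin unfolding T_def by simp

end

locale setting2 = setting G m i sc E \<beta> u e f for G :: "'g set" and m i and sc :: "'k::comm_ring_1 \<Rightarrow> 'r::ring \<Rightarrow> 'r"
    and E :: "'g \<Rightarrow> 'r set" and \<beta> :: "'g \<Rightarrow> 'r \<Rightarrow> 'r" and u :: "'g \<Rightarrow> 'r" and e f +
  fixes enum :: "nat \<Rightarrow> 'g" and l0 :: 'g
  assumes enum_bij0: "bij_betw enum {..<card {g \<in> G. gran m i g = e \<and> gdom m i g = f}} {g \<in> G. gran m i g = e \<and> gdom m i g = f}"
    and l0T0: "l0 \<in> {g \<in> G. gran m i g = e \<and> gdom m i g = f}"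
begin

lemma enum_bij: "bij_betw enum {..<n} T" using enum_bij0 by (simp add: T_def n_def)
lemma l0T: "l0 \<in> T" using l0T0 by (simp add: T_def)

definition idx where "idx = inv_into {..<n} enum"

lemma enum_T: "P < n \<Longrightarrow> enum P \<in> T"
  using enum_bij bij_betwE by blast
lemma idx_lt: "a \<in> T \<Longrightarrow> idx a < n"
  unfolding idx_def using enum_bij
  by (metis bij_betw_def inv_into_into lessThan_iff)
lemma enum_idx: "a \<in> T \<Longrightarrow> enum (idx a) = a"
  unfolding idx_def using enum_bij
  by (metis bij_betw_def f_inv_into_f)
lemma idx_enum: "P < n \<Longrightarrow> idx (enum P) = P"
  unfolding idx_def using enum_bij
  by (metis bij_betw_def inv_into_f_f lessThan_iff)

definition phi :: "('g \<Rightarrow> 'g \<Rightarrow> 'r) \<Rightarrow> nat \<Rightarrow> nat \<Rightarrow> 'r" where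
  "phi x = (\<lambda>P Q. if P < n \<and> Q < n then
      \<beta> (m l0 (i (enum P))) (x (enum Q) (m (enum P) (i (enum Q)))) else 0)"

definition psi :: "(nat \<Rightarrow> nat \<Rightarrow> 'r) \<Rightarrow> 'g \<Rightarrow> 'g \<Rightarrow> 'r" where
  "psi A = (\<lambda>l g. if l \<in> T \<and> ge g then
      \<beta> (m (m g l) (i l0)) (A (idx (m g l)) (idx l)) else 0)"

lemma l0_ge: "a \<in> T \<Longrightarrow> ge (m l0 (i a))"
  using TT_ge l0T by blast

lemma ge_T: "ge g \<Longrightarrow> l \<in> T \<Longrightarrow> m g l \<in> T"
  unfolding ge_def T_mem by auto

lemma phi_mem: "x \<in> Bef G m i E e f \<Longrightarrow> phi x \<in> mat_carrier n (E e)"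
proof -
  assume x: "x \<in> Bef G m i E e f"
  { fix P Q assume PQ: "P < n" "Q < n"
    let ?a = "enum P" and ?c = "enum Q"
    have a: "?a \<in> T" and c: "?c \<in> T" using PQ enum_T by auto
    have g1: "ge (m ?a (i ?c))" using TT_ge a c by blast
    have g2: "ge (m l0 (i ?a))" using l0_ge a by blast
    have "x ?c (m ?a (i ?c)) \<in> E e" using Bef_Ee[OF x g1] .
    then have "\<beta> (m l0 (i ?a)) (x ?c (m ?a (i ?c))) \<in> E e"
      using beta_mem[of "m l0 (i ?a)"] g2 ge_E ge_Ei unfolding ge_def by metis
  }
  then show ?thesis unfolding mat_carrier_def phi_def by auto
qed

end


context setting2 begin

lemma gp1: "a \<in> T \<Longrightarrow> c \<in> T \<Longrightarrow> m (m a (i c)) c = a"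
  unfolding T_mem by auto
lemma gp2: "a \<in> T \<Longrightarrow> ge g \<Longrightarrow> m (m g a) (i a) = g"
  unfolding T_mem ge_def by auto
lemma gp3: "a \<in> T \<Longrightarrow> c \<in> T \<Longrightarrow> b \<in> T \<Longrightarrow> m (m a (i c)) (m c (i b)) = m a (i b)"
  unfolding T_mem by auto
lemma gp4: "a \<in> T \<Longrightarrow> c \<in> T \<Longrightarrow> m (m a (i c)) (m c (i a)) = e"
  unfolding T_mem by auto

lemma beta_ge_comp: "ge g \<Longrightarrow> ge h \<Longrightarrow> x \<in> E e \<Longrightarrow> \<beta> g (\<beta> h x) = \<beta> (m g h) x"
  using beta_comp ge_Ei unfolding ge_def by metis

lemma beta_ge_mem: "ge g \<Longrightarrow> x \<in> E e \<Longrightarrow> \<beta> g x \<in> E e"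
  using beta_mem ge_Ei ge_E unfolding ge_def by metis

lemma beta_e: "x \<in> E e \<Longrightarrow> \<beta> e x = x"
  using beta_obj eobj by blast

lemma psi_mem: "A \<in> mat_carrier n (E e) \<Longrightarrow> psi A \<in> Bef G m i E e f"
proof -
  assume A: "A \<in> mat_carrier n (E e)"
  have "psi A l g \<in> E g" if "l \<in> G" "g \<in> G" for l g
  proof (cases "l \<in> T \<and> ge g")
    case True
    then have a: "m g l \<in> T" using ge_T by blast
    have "A (idx (m g l)) (idx l) \<in> E e" using A idx_lt a True unfolding mat_carrier_def by blast
    then have "\<beta> (m (m g l) (i l0)) (A (idx (m g l)) (idx l)) \<in> E e"
      using beta_ge_mem TT_ge[OF a l0T] by blast
    then show ?thesis using True ge_E unfolding psi_def by simp
  next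
    case False then show ?thesis using that unfolding psi_def by auto
  qed
  moreover have "psi A l g \<noteq> 0 \<Longrightarrow> l \<in> T \<and> ge g" for l g
    unfolding psi_def by (auto split: if_splits)
  ultimately show ?thesis unfolding Bef_def T_mem ge_def by blast
qed

lemma psi_phi: "x \<in> Bef G m i E e f \<Longrightarrow> psi (phi x) = x"
proof (intro ext)
  fix l g assume x: "x \<in> Bef G m i E e f"
  show "psi (phi x) l g = x l g"
  proof (cases "l \<in> T \<and> ge g")
    case True
    let ?a = "m g l"
    have a: "?a \<in> T" using ge_T True by blast
    have "phi x (idx ?a) (idx l) = \<beta> (m l0 (i ?a)) (x l g)"
      unfolding phi_def using idx_lt a True enum_idx gp2[of l g] by simp
    then have "psi (phi x) l g = \<beta> (m ?a (i l0)) (\<beta> (m l0 (i ?a)) (x l g))"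
      unfolding psi_def using True by simp
    also have "\<dots> = \<beta> (m (m ?a (i l0)) (m l0 (i ?a))) (x l g)"
      using beta_ge_comp TT_ge[OF a l0T] TT_ge[OF l0T a] Bef_Ee[OF x] True by blast
    also have "\<dots> = x l g" using gp4[OF a l0T] beta_e Bef_Ee[OF x] True by simp
    finally show ?thesis .
  next
    case False
    then have "x l g = 0" using Bef_D[OF x] by blast
    then show ?thesis using False unfolding psi_def by auto
  qed
qed

lemma phi_psi: "A \<in> mat_carrier n (E e) \<Longrightarrow> phi (psi A) = A"
proof (intro ext)
  fix P Q assume A: "A \<in> mat_carrier n (E e)"
  show "phi (psi A) P Q = A P Q"
  proof (cases "P < n \<and> Q < n")
    case True
    let ?a = "enum P" and ?c = "enum Q"
    have a: "?a \<in> T" and c: "?c \<in> T" using True enum_T by auto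
    have AE: "A P Q \<in> E e" using A True unfolding mat_carrier_def by blast
    have "psi A ?c (m ?a (i ?c)) = \<beta> (m ?a (i l0)) (A P Q)"
      unfolding psi_def using TT_ge[OF a c] c gp1[OF a c] idx_enum True by simp
    then have "phi (psi A) P Q = \<beta> (m l0 (i ?a)) (\<beta> (m ?a (i l0)) (A P Q))"
      unfolding phi_def using True by simp
    also have "\<dots> = \<beta> (m (m l0 (i ?a)) (m ?a (i l0))) (A P Q)"
      using beta_ge_comp TT_ge[OF a l0T] TT_ge[OF l0T a] AE by blast
    also have "\<dots> = A P Q" using gp4[OF l0T a] beta_e AE by simp
    finally show ?thesis .
  next
    case False
    then show ?thesis using A unfolding phi_def mat_carrier_def by auto
  qed
qed

lemma phi_bij: "bij_betw phi (Bef G m i E e f) (mat_carrier n (E e))"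
  by (rule bij_betw_byWitness[where f'=psi]) (auto simp: psi_phi phi_psi phi_mem psi_mem)

end


context setting2 begin

lemma phi_add: "x \<in> Bef G m i E e f \<Longrightarrow> y \<in> Bef G m i E e f \<Longrightarrow>
   phi (\<lambda>l g. x l g + y l g) = (\<lambda>P Q. phi x P Q + phi y P Q)"
proof (intro ext)
  fix P Q assume x: "x \<in> Bef G m i E e f" and y: "y \<in> Bef G m i E e f"
  show "phi (\<lambda>l g. x l g + y l g) P Q = phi x P Q + phi y P Q"
  proof (cases "P < n \<and> Q < n")
    case True
    let ?a = "enum P" and ?c = "enum Q"
    have a: "?a \<in> T" and c: "?c \<in> T" using True enum_T by auto
    have h: "ge (m l0 (i ?a))" using TT_ge[OF l0T a] .
    have "x ?c (m ?a (i ?c)) \<in> E (i (m l0 (i ?a)))" "y ?c (m ?a (i ?c)) \<in> E (i (m l0 (i ?a)))"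
      using Bef_Ee[OF x TT_ge[OF a c]] Bef_Ee[OF y TT_ge[OF a c]] ge_Ei[OF h] by auto
    then show ?thesis unfolding phi_def using True beta_add h unfolding ge_def by simp
  qed (auto simp add: phi_def)
qed

lemma phi_sc: "x \<in> Bef G m i E e f \<Longrightarrow>
   phi (\<lambda>l g. sc c (x l g)) = (\<lambda>P Q. sc c (phi x P Q))"
proof (intro ext)
  fix P Q assume x: "x \<in> Bef G m i E e f"
  show "phi (\<lambda>l g. sc c (x l g)) P Q = sc c (phi x P Q)"
  proof (cases "P < n \<and> Q < n")
    case True
    let ?a = "enum P" and ?c = "enum Q"
    have a: "?a \<in> T" and c: "?c \<in> T" using True enum_T by auto
    have h: "ge (m l0 (i ?a))" using TT_ge[OF l0T a] .
    have "x ?c (m ?a (i ?c)) \<in> E (i (m l0 (i ?a)))"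
      using Bef_Ee[OF x TT_ge[OF a c]] ge_Ei[OF h] by auto
    then show ?thesis unfolding phi_def using True beta_sc h unfolding ge_def by simp
  qed (auto simp add: phi_def)
qed

lemma one_mem: "Bef_one G m i u e f \<in> Bef G m i E e f"
  unfolding Bef_one_def Bef_def using unit_e by auto

lemma phi_one: "phi (Bef_one G m i u e f) = mat_one n (u e)"
proof (intro ext)
  fix P Q
  show "phi (Bef_one G m i u e f) P Q = mat_one n (u e) P Q"
  proof (cases "P < n \<and> Q < n")
    case True
    let ?a = "enum P" and ?c = "enum Q"
    have a: "?a \<in> T" and c: "?c \<in> T" using True enum_T by auto
    have h: "ge (m l0 (i ?a))" using TT_ge[OF l0T a] .
    have eq: "m ?a (i ?c) = e \<longleftrightarrow> P = Q"
    proof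
      assume "m ?a (i ?c) = e"
      then have "?a = m e ?c" using gp1[OF a c] by simp
      then have "?a = ?c" using c unfolding T_mem by (metis lunit)
      then show "P = Q" using True idx_enum by metis
    next
      assume "P = Q" then show "m ?a (i ?c) = e" using a unfolding T_mem by simp
    qed
    show ?thesis unfolding phi_def mat_one_def Bef_one_def
      using True eq c beta_unit h unfolding T_mem ge_def by auto
  qed (auto simp add: phi_def mat_one_def)
qed

definition Sp where "Sp p = {(k, l) \<in> G \<times> G. d k = r l \<and> m k l = p}"

lemma Sp_fin: "finite (Sp p)" unfolding Sp_def
  by (rule finite_subset[of _ "G \<times> G"]) (auto simp: fin)

lemma smash_eq: "smash_mult G m i \<beta> x y h p = (if h \<in> G then
   (\<Sum>g\<in>{g \<in> G. d g = d h}. \<Sum>(k, l)\<in>Sp p. x g k * \<beta> k (gcomp (m g (i h)) (y h) l)) else 0)"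
  unfolding smash_mult_def skew_mult_def Sp_def by simp

lemma smash_closed: "x \<in> Bef G m i E e f \<Longrightarrow> y \<in> Bef G m i E e f \<Longrightarrow>
   smash_mult G m i \<beta> x y \<in> Bef G m i E e f"
proof -
  assume x: "x \<in> Bef G m i E e f" and y: "y \<in> Bef G m i E e f"
  let ?F = "\<lambda>h p g. \<lambda>(k, l). x g k * \<beta> k (gcomp (m g (i h)) (y h) l)"
  have mem: "smash_mult G m i \<beta> x y h p \<in> E p" if "h \<in> G" "p \<in> G" for h p
  proof -
    have "?F h p g kl \<in> E p" if "g \<in> G" "kl \<in> Sp p" for g kl
    proof -
      obtain k l where kl: "kl = (k, l)" by force
      have k: "k \<in> G" "l \<in> G" "d k = r l" "m k l = p" using that kl unfolding Sp_def by auto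
      have "E k = E p" using E_r[OF k(1)] E_r[OF \<open>p \<in> G\<close>] k by auto
      then show ?thesis using kl multl_E[OF k(1) Bef_E[OF x \<open>g \<in> G\<close> k(1)]] by simp
    qed
    then show ?thesis unfolding smash_eq using that
      by (auto intro!: sum_E[OF \<open>p \<in> G\<close>])
  qed
  have nz: "h \<in> T \<and> ge p" if "smash_mult G m i \<beta> x y h p \<noteq> 0" for h p
  proof -
    have hG: "h \<in> G" using that unfolding smash_eq by (auto split: if_splits)
    have s0: "(\<Sum>g\<in>{g \<in> G. d g = d h}. \<Sum>kl\<in>Sp p. ?F h p g kl) \<noteq> 0"
      using that hG unfolding smash_eq by simp
    then obtain g where g: "g \<in> {g \<in> G. d g = d h}" and
      s: "(\<Sum>kl\<in>Sp p. ?F h p g kl) \<noteq> 0"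
      by (rule sum.not_neutral_contains_not_neutral)
    from s obtain kl where kl: "kl \<in> Sp p" and t: "?F h p g kl \<noteq> 0"
      by (rule sum.not_neutral_contains_not_neutral)
    obtain k l where kl': "kl = (k, l)" by force
    have k: "k \<in> G" "l \<in> G" "d k = r l" "m k l = p" using kl kl' unfolding Sp_def by auto
    have "x g k \<noteq> 0" using t kl' by auto
    then have gk: "ge k" using Bef_D[OF x] by blast
    have "gcomp (m g (i h)) (y h) l \<noteq> 0" using t kl' k by auto
    then have "y h l \<noteq> 0" unfolding gcomp_def by (auto split: if_splits)
    then have hl: "h \<in> T" "ge l" using Bef_D[OF y] by auto
    have "ge p" using gk hl k unfolding ge_def by auto
    then show ?thesis using hl by blast
  qed
  show ?thesis using nz mem unfolding Bef_def T_mem ge_def by blast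
qed

end


context setting2 begin

lemma inner_eq:
  assumes x: "x \<in> Bef G m i E e f" and a: "a \<in> T" and c: "c \<in> T"
    and g: "g \<in> G" "d g = d c"
  shows "(\<Sum>(k, l)\<in>Sp (m a (i c)). x g k * \<beta> k (gcomp (m g (i c)) (y c) l)) =
     (if g \<in> T then x g (m a (i g)) * \<beta> (m a (i g)) (y c (m g (i c))) else 0)"
proof (cases "g \<in> T")
  case False
  have "x g k = 0" for k using Bef_D[OF x, of g k] False by blast
  then show ?thesis using False by (simp add: case_prod_beta)
next
  case True
  let ?k0 = "m a (i g)" and ?l1 = "m g (i c)"
  let ?F = "\<lambda>(k, l). x g k * \<beta> k (gcomp (m g (i c)) (y c) l)"
  have mem: "(?k0, ?l1) \<in> Sp (m a (i c))"
    unfolding Sp_def using gp3[OF a True c] a c True unfolding T_mem by auto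
  have rest: "?F kl = 0" if "kl \<in> Sp (m a (i c)) - {(?k0, ?l1)}" for kl
  proof -
    obtain k l where kl: "kl = (k, l)" by force
    have k: "k \<in> G" "l \<in> G" "d k = r l" "m k l = m a (i c)" "(k, l) \<noteq> (?k0, ?l1)"
      using that kl unfolding Sp_def by auto
    show ?thesis
    proof (cases "l = ?l1")
      case True
      have k0: "?k0 \<in> G" "d ?k0 = r l" "m ?k0 l = m a (i c)"
        using mem True unfolding Sp_def by auto
      have "k = ?k0" using cancel_r[of k ?k0 l] k k0 by simp
      then show ?thesis using k True by simp
    next
      case False
      then show ?thesis using kl k unfolding gcomp_def by simp
    qed
  qed
  have "sum ?F (Sp (m a (i c))) = ?F (?k0, ?l1) + sum ?F (Sp (m a (i c)) - {(?k0, ?l1)})"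
    by (rule sum.remove[OF Sp_fin mem])
  also have "sum ?F (Sp (m a (i c)) - {(?k0, ?l1)}) = 0" using rest by (rule sum.neutral[OF ballI])
  finally show ?thesis using True unfolding gcomp_def by simp
qed

lemma phi_mult: "x \<in> Bef G m i E e f \<Longrightarrow> y \<in> Bef G m i E e f \<Longrightarrow>
   phi (smash_mult G m i \<beta> x y) = mat_mult n (phi x) (phi y)"
proof (intro ext)
  fix P Q assume x: "x \<in> Bef G m i E e f" and y: "y \<in> Bef G m i E e f"
  show "phi (smash_mult G m i \<beta> x y) P Q = mat_mult n (phi x) (phi y) P Q"
  proof (cases "P < n \<and> Q < n")
    case True
    let ?a = "enum P" and ?c = "enum Q"
    have a: "?a \<in> T" and c: "?c \<in> T" using True enum_T by auto
    let ?h = "m l0 (i ?a)"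
    have h: "ge ?h" using TT_ge[OF l0T a] .
    let ?F = "\<lambda>g. x g (m ?a (i g)) * \<beta> (m ?a (i g)) (y ?c (m g (i ?c)))"
    let ?H = "\<lambda>g. \<beta> ?h (x g (m ?a (i g))) * \<beta> (m l0 (i g)) (y ?c (m g (i ?c)))"
    have cG: "?c \<in> G" "d ?c = f" using c unfolding T_mem by auto
    have "smash_mult G m i \<beta> x y ?c (m ?a (i ?c)) =
       (\<Sum>g\<in>{g \<in> G. d g = d ?c}. \<Sum>(k, l)\<in>Sp (m ?a (i ?c)). x g k * \<beta> k (gcomp (m g (i ?c)) (y ?c) l))"
      unfolding smash_eq using cG by simp
    also have "\<dots> = (\<Sum>g\<in>{g \<in> G. d g = d ?c}. if g \<in> T then ?F g else 0)"
      by (rule sum.cong[OF refl]) (use inner_eq[OF x a c] in auto)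
    also have "\<dots> = sum ?F ({g \<in> G. d g = d ?c} \<inter> T)"
      using sum.inter_restrict[of "{g \<in> G. d g = d ?c}" ?F T] fin by simp
    also have "{g \<in> G. d g = d ?c} \<inter> T = T" using cG(2) unfolding T_def by auto
    finally have s: "smash_mult G m i \<beta> x y ?c (m ?a (i ?c)) = sum ?F T" .
    have FH: "\<beta> ?h (?F g) = ?H g" if g: "g \<in> T" for g
    proof -
      have g1: "ge (m ?a (i g))" using TT_ge[OF a g] .
      have g2: "ge (m g (i ?c))" using TT_ge[OF g c] .
      have X: "x g (m ?a (i g)) \<in> E e" using Bef_Ee[OF x g1] .
      have Y: "y ?c (m g (i ?c)) \<in> E e" using Bef_Ee[OF y g2] .
      have BY: "\<beta> (m ?a (i g)) (y ?c (m g (i ?c))) \<in> E e" using beta_ge_mem[OF g1 Y] .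
      have "\<beta> ?h (?F g) = \<beta> ?h (x g (m ?a (i g))) * \<beta> ?h (\<beta> (m ?a (i g)) (y ?c (m g (i ?c))))"
        using beta_mult[of ?h] h X BY ge_Ei[OF h] unfolding ge_def by simp
      also have "\<beta> ?h (\<beta> (m ?a (i g)) (y ?c (m g (i ?c)))) =
          \<beta> (m ?h (m ?a (i g))) (y ?c (m g (i ?c)))"
        using beta_ge_comp[OF h g1 Y] .
      also have "m ?h (m ?a (i g)) = m l0 (i g)" using gp3[OF l0T a g] .
      finally show ?thesis .
    qed
    have FE: "?F g \<in> E (i ?h)" if g: "g \<in> T" for g
    proof -
      have g1: "ge (m ?a (i g))" using TT_ge[OF a g] .
      have "x g (m ?a (i g)) \<in> E e" using Bef_Ee[OF x g1] .
      then have "?F g \<in> E e" using multl_E[of e] by simp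
      then show ?thesis using ge_Ei[OF h] by simp
    qed
    have "phi (smash_mult G m i \<beta> x y) P Q = \<beta> ?h (sum ?F T)"
      unfolding phi_def using True s by simp
    also have "\<dots> = (\<Sum>g\<in>T. \<beta> ?h (?F g))"
      using beta_sum[of ?h T ?F] h FE unfolding ge_def by blast
    also have "\<dots> = sum ?H T" using FH by (rule sum.cong[OF refl])
    also have "\<dots> = (\<Sum>K<n. ?H (enum K))"
      by (rule sum.reindex_bij_betw[OF enum_bij, symmetric])
    also have "\<dots> = (\<Sum>K<n. phi x P K * phi y K Q)"
      using True by (intro sum.cong) (auto simp: phi_def)
    also have "\<dots> = mat_mult n (phi x) (phi y) P Q"
      unfolding mat_mult_def using True by simp
    finally show ?thesis .
  qed (auto simp: phi_def mat_mult_def)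
qed

end
theorem proposition3p6:
  fixes G :: "'g set" and m :: "'g \<Rightarrow> 'g \<Rightarrow> 'g" and i :: "'g \<Rightarrow> 'g"
    and sc :: "'k::comm_ring_1 \<Rightarrow> 'r::ring \<Rightarrow> 'r"
    and E :: "'g \<Rightarrow> 'r set" and \<beta> :: "'g \<Rightarrow> 'r \<Rightarrow> 'r" and u :: "'g \<Rightarrow> 'r"
    and e f :: 'g
  assumes "finite G" and "groupoid G m i"
    and "kalgebra sc"
    and "groupoid_action G m i sc E \<beta>"
    and "\<forall>e'\<in>gobjs G m i. u e' \<in> E e' \<and> (\<forall>x\<in>E e'. u e' * x = x \<and> x * u e' = x)"
    and "e \<in> gobjs G m i" and "f \<in> gobjs G m i"
    and "{g \<in> G. gran m i g = e \<and> gdom m i g = f} \<noteq> {}"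
  shows "\<exists>\<phi>. bij_betw \<phi> (Bef G m i E e f)
                (mat_carrier (card {g \<in> G. gran m i g = e \<and> gdom m i g = f}) (E e)) \<and>
           (\<forall>x\<in>Bef G m i E e f. \<forall>y\<in>Bef G m i E e f.
              smash_mult G m i \<beta> x y \<in> Bef G m i E e f \<and>
              \<phi> (\<lambda>l g. x l g + y l g) = (\<lambda>p q. \<phi> x p q + \<phi> y p q) \<and>
              \<phi> (smash_mult G m i \<beta> x y) =
                mat_mult (card {g \<in> G. gran m i g = e \<and> gdom m i g = f}) (\<phi> x) (\<phi> y)) \<and>
           (\<forall>c. \<forall>x\<in>Bef G m i E e f. \<phi> (\<lambda>l g. sc c (x l g)) = (\<lambda>p q. sc c (\<phi> x p q))) \<and>
           Bef_one G m i u e f \<in> Bef G m i E e f \<and>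
           \<phi> (Bef_one G m i u e f) = mat_one (card {g \<in> G. gran m i g = e \<and> gdom m i g = f}) (u e)"
proof -
  interpret setting G m i sc E \<beta> u e f
    using assms by (simp add: setting_def gpd_def setting_axioms_def)
  have fT: "finite {g \<in> G. gran m i g = e \<and> gdom m i g = f}" using assms(1) by simp
  obtain enum where en: "bij_betw enum {..<card {g \<in> G. gran m i g = e \<and> gdom m i g = f}}
      {g \<in> G. gran m i g = e \<and> gdom m i g = f}"
    using ex_bij_betw_nat_finite[OF fT] by (auto simp: atLeast0LessThan)
  obtain l0 where l0: "l0 \<in> {g \<in> G. gran m i g = e \<and> gdom m i g = f}" using assms(8) by blast
  interpret setting2 G m i sc E \<beta> u e f enum l0
    using en l0 by unfold_locales
  have nn: "card {g \<in> G. gran m i g = e \<and> gdom m i g = f} = n" by (simp add: n_def T_def)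
  show ?thesis unfolding nn
    using phi_bij phi_add phi_sc phi_mult smash_closed one_mem phi_one by blast
qed

end
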